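(* Let $0\le l<k\le n$, $\Lambda=(\lambda_1,\dots,\lambda_n)\in\Gamma_k^+$, and for $1\le i\le n$ set $$F^{ii}=F^*\big\{\sigma_l(\Lambda)\sigma_{k-1}(\Lambda_i)-\sigma_k(\Lambda)\sigma_{l-1}(\Lambda_i)\big\},\qquad F^*=\frac1{k-l}\Big(\frac{\sigma_k(\Lambda)}{\sigma_l(\Lambda)}\Big)^{\frac1{k-l}-1}\frac1{\sigma_l(\Lambda)^2}.$$ If $\lambda_i\le\lambda_j$ then $F^{ii}\ge F^{jj}$. If moreover $(n-k+1)(n-l+1)>2(n+1)$ and $\lambda_1>0$, then there is a constant $c(n,k,l)>0$ depending only on $n,k,l$ such that $\sum_{i=1}^nF^{ii}\ge(2+c(n,k,l))F^{11}$.
   Context: $\sigma_j$ is the $j$-th elementary symmetric function, with $\sigma_0\equiv1$, $\sigma_{-1}\equiv0$. $\Gamma_k^+=\{\Lambda\in\mathbb R^n:\sigma_j(\Lambda)>0 \text{ for } 1\le j\le k\}$. $\Lambda_i\in\mathbb R^{n-1}$ denotes $\Lambda$ with its $i$-th component deleted. *)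

theory Defs
  imports Complex_Main
begin

text \<open>Elementary symmetric function of order j of the components of a vector
  indexed by the finite set A; j is an integer so that sigma_{-1} = 0.
  sigma_0 = 1 (product over the empty set).\<close>
definition esym :: "int \<Rightarrow> nat set \<Rightarrow> (nat \<Rightarrow> real) \<Rightarrow> real" where
  "esym j A lam = (if j < 0 then 0
     else (\<Sum>S\<in>{S. S \<subseteq> A \<and> card S = nat j}. \<Prod>i\<in>S. lam i))"

definition sigma :: "nat \<Rightarrow> int \<Rightarrow> (nat \<Rightarrow> real) \<Rightarrow> real" where
  "sigma n j lam = esym j {1..n} lam"

definition sigma_del :: "nat \<Rightarrow> int \<Rightarrow> (nat \<Rightarrow> real) \<Rightarrow> nat \<Rightarrow> real" where
  "sigma_del n j lam i = esym j ({1..n} - {i}) lam"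

definition Gamma_plus :: "nat \<Rightarrow> nat \<Rightarrow> (nat \<Rightarrow> real) set" where
  "Gamma_plus n k = {lam. \<forall>j\<in>{1..k}. sigma n (int j) lam > 0}"

definition Fstar :: "nat \<Rightarrow> nat \<Rightarrow> nat \<Rightarrow> (nat \<Rightarrow> real) \<Rightarrow> real" where
  "Fstar n k l lam = (1 / real (k - l)) *
     (sigma n (int k) lam / sigma n (int l) lam) powr (1 / real (k - l) - 1) *
     (1 / (sigma n (int l) lam)^2)"

definition Fii :: "nat \<Rightarrow> nat \<Rightarrow> nat \<Rightarrow> (nat \<Rightarrow> real) \<Rightarrow> nat \<Rightarrow> real" where
  "Fii n k l lam i = Fstar n k l lam *
     (sigma n (int l) lam * sigma_del n (int k - 1) lam i
      - sigma n (int k) lam * sigma_del n (int l - 1) lam i)"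

end

theory Submission
  imports Defs "HOL-Computational_Algebra.Polynomial"
begin


lemma esym_neg: "j < 0 \<Longrightarrow> esym j A lam = 0"
  by (simp add: esym_def)

lemma esym_zero: "finite A \<Longrightarrow> esym 0 A lam = 1"
proof -
  assume A: "finite A"
  have "{S. S \<subseteq> A \<and> card S = 0} = {{}}"
  proof (intro set_eqI iffI)
    fix S assume "S \<in> {S. S \<subseteq> A \<and> card S = 0}"
    hence "S \<subseteq> A" "card S = 0" by auto
    moreover have "finite S" using \<open>S \<subseteq> A\<close> A finite_subset by blast
    ultimately show "S \<in> {{}}" by simp
  qed auto
  thus ?thesis by (simp add: esym_def)
qed

lemma esym_gt: "finite A \<Longrightarrow> j > int (card A) \<Longrightarrow> esym j A lam = 0"
proof -
  assume A: "finite A" and j: "j > int (card A)"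
  have e: "{S. S \<subseteq> A \<and> card S = nat j} = {}"
  proof (rule ccontr)
    assume "{S. S \<subseteq> A \<and> card S = nat j} \<noteq> {}"
    then obtain S where "S \<subseteq> A" "card S = nat j" by blast
    hence "card S \<le> card A" using A card_mono by blast
    thus False using \<open>card S = nat j\<close> j by linarith
  qed
  have "\<not> j < 0" using j by simp
  thus ?thesis unfolding esym_def e by simp
qed

lemma esym_empty: "esym j {} lam = (if j = 0 then 1 else 0)"
proof -
  consider "j < 0" | "j = 0" | "j > 0" by linarith
  then show ?thesis
    by cases (simp_all add: esym_neg esym_zero esym_gt)
qed

lemma esym_insert:
  assumes A: "finite A" and x: "x \<notin> A"
  shows "esym j (insert x A) lam = esym j A lam + lam x * esym (j - 1) A lam"
proof (cases "j \<ge> 1")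
  case False
  then consider "j < 0" | "j = 0" by linarith
  then show ?thesis
  proof cases
    case 1 then show ?thesis by (simp add: esym_neg)
  next
    case 2 then show ?thesis using A by (simp add: esym_zero esym_neg)
  qed
next
  case True
  define m where "m = nat j"
  have m1: "m \<ge> 1" and jm: "j = int m" using True by (auto simp: m_def)
  let ?L = "{S. S \<subseteq> A \<and> card S = m}"
  let ?R = "{S. S \<subseteq> A \<and> card S = m - 1}"
  have split: "{S. S \<subseteq> insert x A \<and> card S = m} = ?L \<union> insert x ` ?R"
  proof (intro set_eqI iffI)
    fix S assume "S \<in> {S. S \<subseteq> insert x A \<and> card S = m}"
    hence S: "S \<subseteq> insert x A" "card S = m" by auto
    have fS: "finite S" using S(1) A by (meson finite_insert finite_subset)
    show "S \<in> ?L \<union> insert x ` ?R"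
    proof (cases "x \<in> S")
      case False then show ?thesis using S by auto
    next
      case True
      have "S - {x} \<in> ?R" using S fS True by auto
      moreover have "S = insert x (S - {x})" using True by auto
      ultimately show ?thesis by blast
    qed
  next
    fix S assume "S \<in> ?L \<union> insert x ` ?R"
    then show "S \<in> {S. S \<subseteq> insert x A \<and> card S = m}"
    proof
      assume "S \<in> ?L" then show ?thesis by auto
    next
      assume "S \<in> insert x ` ?R"
      then obtain T where T: "T \<subseteq> A" "card T = m - 1" "S = insert x T" by auto
      have "finite T" using T A finite_subset by auto
      moreover have "x \<notin> T" using T x by auto
      ultimately have "card S = m" using T m1 by simp
      then show ?thesis using T by auto
    qed
  qed
  have fin: "finite ?L" "finite (insert x ` ?R)"
    using A by (auto intro: finite_subset[of _ "Pow A"])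
  have disj: "?L \<inter> insert x ` ?R = {}" using x by auto
  have inj: "inj_on (insert x) ?R"
    unfolding inj_on_def using x by (metis (no_types, lifting) insert_ident mem_Collect_eq subsetD)
  have "esym j (insert x A) lam = (\<Sum>S\<in>?L \<union> insert x ` ?R. \<Prod>i\<in>S. lam i)"
    using True jm by (simp add: esym_def split)
  also have "\<dots> = (\<Sum>S\<in>?L. \<Prod>i\<in>S. lam i) + (\<Sum>S\<in>insert x ` ?R. \<Prod>i\<in>S. lam i)"
    by (rule sum.union_disjoint[OF fin disj])
  also have "(\<Sum>S\<in>insert x ` ?R. \<Prod>i\<in>S. lam i) = (\<Sum>T\<in>?R. \<Prod>i\<in>insert x T. lam i)"
    by (rule sum.reindex[OF inj, unfolded comp_def])
  also have "\<dots> = (\<Sum>T\<in>?R. lam x * (\<Prod>i\<in>T. lam i))"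
  proof (rule sum.cong[OF refl])
    fix T assume "T \<in> ?R"
    hence "finite T" "x \<notin> T" using A x finite_subset by auto
    thus "(\<Prod>i\<in>insert x T. lam i) = lam x * (\<Prod>i\<in>T. lam i)" by simp
  qed
  also have "\<dots> = lam x * esym (j - 1) A lam"
    using jm m1 by (simp add: esym_def sum_distrib_left nat_diff_distrib)
  finally show ?thesis using jm by (simp add: esym_def)
qed



lemma esym_remove:
  assumes "finite A" "x \<in> A"
  shows "esym j A lam = esym j (A - {x}) lam + lam x * esym (j - 1) (A - {x}) lam"
proof -
  have "A = insert x (A - {x})" using assms by auto
  hence "esym j A lam = esym j (insert x (A - {x})) lam" by simp
  also have "\<dots> = esym j (A - {x}) lam + lam x * esym (j - 1) (A - {x}) lam"
    using assms by (intro esym_insert) auto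
  finally show ?thesis .
qed

lemma esym_card: "finite A \<Longrightarrow> esym (int (card A)) A lam = (\<Prod>i\<in>A. lam i)"
proof (induction A rule: finite_induct)
  case empty then show ?case by (simp add: esym_empty)
next
  case (insert x A)
  have "esym (int (card (insert x A))) (insert x A) lam
      = esym (int (card A) + 1) A lam + lam x * esym (int (card A)) A lam"
    using insert by (simp add: esym_insert add.commute)
  also have "esym (int (card A) + 1) A lam = 0" using insert by (simp add: esym_gt)
  finally show ?case using insert by simp
qed

lemma sum_del:
  "finite A \<Longrightarrow> (\<Sum>i\<in>A. esym j (A - {i}) lam) = (real (card A) - of_int j) * esym j A lam"
proof (induction A arbitrary: j rule: finite_induct)
  case empty then show ?case by (simp add: esym_empty)
next
  case (insert x A)
  have "(\<Sum>i\<in>insert x A. esym j (insert x A - {i}) lam)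
      = esym j A lam + (\<Sum>i\<in>A. esym j (insert x A - {i}) lam)"
    using insert by (simp add: sum.insert)
  also have "(\<Sum>i\<in>A. esym j (insert x A - {i}) lam)
      = (\<Sum>i\<in>A. esym j (A - {i}) lam + lam x * esym (j - 1) (A - {i}) lam)"
  proof (rule sum.cong[OF refl])
    fix i assume "i \<in> A"
    hence "insert x A - {i} = insert x (A - {i})" using insert by auto
    thus "esym j (insert x A - {i}) lam = esym j (A - {i}) lam + lam x * esym (j - 1) (A - {i}) lam"
      using insert by (simp add: esym_insert)
  qed
  also have "\<dots> = (real (card A) - of_int j) * esym j A lam
      + lam x * ((real (card A) - of_int (j - 1)) * esym (j - 1) A lam)"
    using insert by (simp add: sum.distrib sum_distrib_left[symmetric])
  finally show ?case using insert by (simp add: esym_insert algebra_simps)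
qed

definition PP :: "nat set \<Rightarrow> (nat \<Rightarrow> real) \<Rightarrow> real poly" where
  "PP A lam = (\<Prod>i\<in>A. [:lam i, 1:])"

lemma coeff_PP: "finite A \<Longrightarrow> coeff (PP A lam) j = esym (int (card A) - int j) A lam"
proof (induction A arbitrary: j rule: finite_induct)
  case empty then show ?case by (simp add: PP_def esym_empty)
next
  case (insert x A)
  have P: "PP (insert x A) lam = smult (lam x) (PP A lam) + pCons 0 (PP A lam)"
    using insert by (simp add: PP_def)
  show ?case
  proof (cases j)
    case 0
    then show ?thesis using insert by (simp add: P esym_insert esym_gt)
  next
    case (Suc n)
    then show ?thesis using insert by (simp add: P esym_insert algebra_simps)
  qed
qed

lemma degree_PP: "finite A \<Longrightarrow> degree (PP A lam) = card A"
proof -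
  assume A: "finite A"
  have "degree (PP A lam) \<le> card A"
    by (rule degree_le) (use A in \<open>simp add: coeff_PP esym_neg\<close>)
  moreover have "coeff (PP A lam) (card A) = 1" using A by (simp add: coeff_PP esym_zero)
  hence "card A \<le> degree (PP A lam)" by (intro le_degree) simp
  ultimately show ?thesis by simp
qed

lemma PP_nz: "finite A \<Longrightarrow> PP A lam \<noteq> 0"
  using coeff_PP[of A lam "card A"] by (auto simp: esym_zero)

lemma lead_PP: "finite A \<Longrightarrow> lead_coeff (PP A lam) = 1"
  by (simp add: degree_PP coeff_PP esym_zero)

lemma size_proots_PP: "finite A \<Longrightarrow> size (proots (PP A lam)) = card A"
proof -
  assume A: "finite A"
  have "proots (PP A lam) = (\<Sum>i\<in>A. proots [:lam i, 1:])"
    unfolding PP_def by (rule proots_prod) simp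
  thus ?thesis by simp
qed

lemma split_poly:
  fixes p :: "real poly"
  assumes "p \<noteq> 0" "size (proots p) = degree p"
  shows "p = smult (lead_coeff p) (\<Prod>x\<in>#proots p. [:-x, 1:])"
  using assms
proof (induction "degree p" arbitrary: p)
  case 0
  hence "proots p = {#}" by simp
  then show ?case using degree_0_id[OF 0(1)[symmetric]] 0 by simp
next
  case (Suc n)
  then obtain a where a: "a \<in># proots p" by (metis size_eq_0_iff_empty multiset_nonemptyE nat.distinct(1))
  hence "poly p a = 0" using Suc by simp
  then obtain r where r: "p = [:-a, 1:] * r" using poly_eq_0_iff_dvd by (metis dvdE)
  have rnz: "r \<noteq> 0" using r Suc by auto
  have "degree ([:-a, 1:] * r) = degree [:-a, 1:] + degree r"
    by (rule degree_mult_eq) (use rnz in auto)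
  hence dr: "degree p = 1 + degree r" using r by simp
  have "proots ([:-a, 1:] * r) = proots [:-a, 1:] + proots r"
    by (rule proots_mult) (use rnz in auto)
  also have "proots [:-a, 1:] = {#a#}" using proots_linear_factor[of "-a"] by simp
  finally have pr: "proots p = add_mset a (proots r)" using r by simp
  have "size (proots r) = degree r" using Suc pr dr by simp
  moreover have "n = degree r" using Suc dr by simp
  ultimately have IH: "r = smult (lead_coeff r) (\<Prod>x\<in>#proots r. [:-x, 1:])"
    using Suc rnz by blast
  have "lead_coeff p = lead_coeff [:-a, 1:] * lead_coeff r" unfolding r by (rule lead_coeff_mult)
  hence "lead_coeff p = lead_coeff r" by simp
  show ?case
    apply (subst r)
    apply (subst IH)
    using \<open>lead_coeff p = lead_coeff r\<close> pr by (simp add: mult_ac)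
qed

lemma sum_order_le:
  fixes q :: "real poly"
  assumes "q \<noteq> 0" "finite S"
  shows "(\<Sum>x\<in>S. order x q) \<le> size (proots q)"
proof -
  let ?R = "set_mset (proots q)"
  have "(\<Sum>x\<in>S. order x q) = (\<Sum>x\<in>S. count (proots q) x)" using assms by simp
  also have "\<dots> = (\<Sum>x\<in>S \<inter> ?R. count (proots q) x)"
    by (rule sum.mono_neutral_right) (use assms in \<open>auto simp: count_eq_zero_iff order_root\<close>)
  also have "\<dots> \<le> (\<Sum>x\<in>?R. count (proots q) x)"
    by (rule sum_mono2) auto
  also have "\<dots> = size (proots q)" by (simp add: size_multiset_overloaded_eq)
  finally show ?thesis .
qed



lemma roots_deriv:
  fixes p :: "real poly"
  assumes pnz: "p \<noteq> 0" and sz: "size (proots p) = degree p" and d1: "degree p \<ge> 1"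
  shows "size (proots (pderiv p)) = degree (pderiv p)"
proof -
  define q where "q = pderiv p"
  have qnz: "q \<noteq> 0" using d1 by (simp add: q_def pderiv_eq_0_iff)
  have dq: "degree q = degree p - 1" by (simp add: q_def degree_pderiv)
  define R where "R = {x. poly p x = 0}"
  have RR: "R = set_mset (proots p)" using pnz by (simp add: R_def)
  have finR: "finite R" using RR by simp
  have Rne: "R \<noteq> {}" using sz d1 RR by auto
  have ordR: "order r p = Suc (order r q)" if "r \<in> R" for r
    using order_pderiv[OF pnz] that by (simp add: R_def q_def)
  have sumR: "(\<Sum>r\<in>R. order r p) = degree p"
    using sz pnz by (simp add: RR size_multiset_overloaded_eq)
  have sumR2: "(\<Sum>r\<in>R. order r q) + card R = degree p"
  proof -
    have "(\<Sum>r\<in>R. order r p) = (\<Sum>r\<in>R. Suc (order r q))" using ordR by simp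
    also have "\<dots> = (\<Sum>r\<in>R. order r q) + card R" by (rule sum_Suc)
    finally show ?thesis using sumR by simp
  qed
  define R' where "R' = R - {Max R}"
  define nx where "nx r = Min {s\<in>R. r < s}" for r
  have nx: "nx r \<in> R \<and> r < nx r \<and> (\<forall>s\<in>R. r < s \<longrightarrow> nx r \<le> s)" if "r \<in> R'" for r
  proof -
    have rR: "r \<in> R" "r \<noteq> Max R" using that by (auto simp: R'_def)
    hence "r < Max R" using finR by (meson Max_ge order_le_neq_trans)
    moreover have "Max R \<in> R" using finR Rne by (rule Max_in)
    ultimately have ne: "{s\<in>R. r < s} \<noteq> {}" by blast
    have fin: "finite {s\<in>R. r < s}" using finR by simp
    have "nx r \<in> {s\<in>R. r < s}" unfolding nx_def using Min_in[OF fin ne] .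
    moreover have "\<forall>s\<in>R. r < s \<longrightarrow> nx r \<le> s" unfolding nx_def using fin by auto
    ultimately show ?thesis by auto
  qed
  have rolle: "\<exists>z. r < z \<and> z < nx r \<and> poly q z = 0" if "r \<in> R'" for r
  proof -
    have rR: "r \<in> R" using that by (auto simp: R'_def)
    have "\<exists>z. r < z \<and> z < nx r \<and> DERIV (poly p) z :> 0"
    proof (rule Rolle)
      show "r < nx r" using nx[OF that] by simp
      show "poly p r = poly p (nx r)" using nx[OF that] rR by (simp add: R_def)
      show "continuous_on {r..nx r} (poly p)" by (intro continuous_intros)
      show "poly p differentiable (at x)" for x
        using poly_DERIV real_differentiable_def by blast
    qed
    then obtain z where z: "r < z" "z < nx r" "DERIV (poly p) z :> 0" by blast
    have "poly q z = 0" using DERIV_unique[OF z(3) poly_DERIV] by (simp add: q_def)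
    thus ?thesis using z by blast
  qed
  obtain u where u: "\<forall>r\<in>R'. r < u r \<and> u r < nx r \<and> poly q (u r) = 0"
    using rolle by metis
  have uR: "u r \<notin> R" if "r \<in> R'" for r
  proof
    assume "u r \<in> R"
    hence "nx r \<le> u r" using nx[OF that] u that by auto
    thus False using u that by auto
  qed
  have inj: "inj_on u R'"
  proof (rule inj_onI)
    fix a b assume ab: "a \<in> R'" "b \<in> R'" "u a = u b"
    show "a = b"
    proof (rule ccontr)
      assume "a \<noteq> b"
      then consider "a < b" | "b < a" by linarith
      then show False
      proof cases
        case 1
        have "nx a \<le> b" using nx[OF ab(1)] ab(2) 1 by (auto simp: R'_def)
        moreover have "u a < nx a" "b < u b" using u ab by auto
        ultimately show False using ab(3) by linarith
      next
        case 2
        have "nx b \<le> a" using nx[OF ab(2)] ab(1) 2 by (auto simp: R'_def)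
        moreover have "u b < nx b" "a < u a" using u ab by auto
        ultimately show False using ab(3) by linarith
      qed
    qed
  qed
  define U where "U = u ` R'"
  have cardU: "card U + 1 = card R"
  proof -
    have "card U = card R'" unfolding U_def using inj by (simp add: card_image)
    moreover have "card R' = card R - 1" unfolding R'_def using finR Rne by (simp add: Max_in)
    moreover have "card R \<ge> 1" using finR Rne by (simp add: Suc_leI card_gt_0_iff)
    ultimately show ?thesis by simp
  qed
  have finU: "finite U" unfolding U_def R'_def using finR by simp
  have disj: "R \<inter> U = {}" unfolding U_def using uR by auto
  have sumU: "card U \<le> (\<Sum>x\<in>U. order x q)"
  proof -
    have "(\<Sum>x\<in>U. (1::nat)) \<le> (\<Sum>x\<in>U. order x q)"
    proof (rule sum_mono)
      fix x assume "x \<in> U"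
      then obtain r where "r \<in> R'" "x = u r" unfolding U_def by blast
      hence "poly q x = 0" using u by auto
      hence "order x q \<noteq> 0" using qnz order_root by blast
      thus "1 \<le> order x q" by simp
    qed
    thus ?thesis by simp
  qed
  have "(\<Sum>x\<in>R \<union> U. order x q) = (\<Sum>x\<in>R. order x q) + (\<Sum>x\<in>U. order x q)"
    by (rule sum.union_disjoint) (use finR finU disj in auto)
  moreover have "(\<Sum>x\<in>R \<union> U. order x q) \<le> size (proots q)"
    by (rule sum_order_le) (use qnz finR finU in auto)
  ultimately have "degree p - 1 \<le> size (proots q)" using sumR2 sumU cardU by linarith
  moreover have "size (proots q) \<le> degree q" by (rule size_proots_le)
  ultimately show ?thesis using dq by (simp add: q_def)
qed

lemma deriv_exists:
  assumes A: "finite A" and N: "card A = N" "N \<ge> 1"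
  shows "\<exists>B mu. finite B \<and> card B = N - 1 \<and>
           (\<forall>j. real N * esym j B mu = (real N - of_int j) * esym j A lam)"
proof -
  define p where "p = PP A lam"
  define q where "q = pderiv p"
  have pnz: "p \<noteq> 0" using A by (simp add: p_def PP_nz)
  have dp: "degree p = N" using A N by (simp add: p_def degree_PP)
  have sp: "size (proots p) = degree p" using A N dp by (simp add: p_def size_proots_PP)
  have sq: "size (proots q) = degree q" unfolding q_def by (rule roots_deriv[OF pnz sp]) (use dp N in simp)
  have dq: "degree q = N - 1" using dp by (simp add: q_def degree_pderiv)
  have qnz: "q \<noteq> 0" using N dp by (simp add: q_def pderiv_eq_0_iff)
  have cq: "coeff q n = real (Suc n) * esym (int N - int (Suc n)) A lam" for n
    using A N by (simp add: q_def p_def coeff_pderiv coeff_PP)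
  have lq: "lead_coeff q = real N"
    using cq[of "N - 1"] dq N by (simp add: esym_zero A)
  obtain xs where xs: "mset xs = proots q" using ex_mset by blast
  have lxs: "length xs = N - 1" using xs sq dq by (metis size_mset)
  define B where "B = {0..<length xs}"
  define mu where "mu i = - (xs ! i)" for i
  have "(\<Prod>x\<in>#proots q. [:-x, 1:]) = (\<Prod>x\<leftarrow>xs. [:-x, 1:])"
    by (subst prod_mset_prod_list [symmetric]) (simp add: xs)
  also have "\<dots> = (\<Prod>i<length xs. [:-xs ! i, 1:])"
    by (subst prod.list_conv_set_nth) (auto simp: atLeast0LessThan)
  also have "\<dots> = PP B mu" by (simp add: PP_def B_def mu_def atLeast0LessThan)
  finally have qeq: "q = smult (real N) (PP B mu)"
    using split_poly[OF qnz sq] lq by simp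
  have finB: "finite B" and cB: "card B = N - 1" using lxs by (auto simp: B_def)
  have main: "real N * esym j B mu = (real N - of_int j) * esym j A lam" for j
  proof -
    consider "j < 0" | "j > int N - 1" | "0 \<le> j \<and> j \<le> int N - 1" by linarith
    then show ?thesis
    proof cases
      case 1 then show ?thesis by (simp add: esym_neg)
    next
      case 2
      have "esym j B mu = 0" using 2 finB cB N by (intro esym_gt) auto
      moreover have "(real N - of_int j) * esym j A lam = 0"
      proof (cases "j = int N")
        case True then show ?thesis by simp
      next
        case False
        hence "j > int (card A)" using 2 N by simp
        then show ?thesis using A by (simp add: esym_gt)
      qed
      ultimately show ?thesis by simp
    next
      case 3
      define n where "n = nat (int N - 1 - j)"
      have nj: "int n = int N - 1 - j" using 3 by (simp add: n_def)
      have "coeff (PP B mu) n = esym (int (card B) - int n) B mu" by (rule coeff_PP[OF finB])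
      also have "int (card B) - int n = j" using cB nj N by simp
      finally have h1: "coeff q n = real N * esym j B mu" using qeq by simp
      have e2: "int N - int (Suc n) = j" using nj by simp
      have h2: "coeff q n = real (Suc n) * esym j A lam" using cq[of n] unfolding e2 .
      have "real (Suc n) = real N - of_int j"
      proof -
        have "int (Suc n) = int N - j" using nj by simp
        hence "real_of_int (int (Suc n)) = real_of_int (int N - j)" by simp
        thus ?thesis by simp
      qed
      then show ?thesis using h1 h2 by simp
    qed
  qed
  show ?thesis using finB cB main by blast
qed



definition NW :: "nat set \<Rightarrow> (nat \<Rightarrow> real) \<Rightarrow> int \<Rightarrow> bool" where
  "NW A lam m \<longleftrightarrow> (real (card A) - of_int m + 1) * (of_int m + 1) * esym (m - 1) A lam * esym (m + 1) A lam
     \<le> of_int m * (real (card A) - of_int m) * (esym m A lam)\<^sup>2"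

lemma newton_step:
  assumes IH: "\<And>B mu m. finite B \<Longrightarrow> card B = N - 1 \<Longrightarrow> 1 \<le> m \<Longrightarrow> NW B mu m"
    and A: "finite A" "card A = N" and m: "1 \<le> m" "m \<le> int N - 2"
  shows "NW A lam m"
proof -
  have N1: "N \<ge> 1" using m by linarith
  obtain B mu where B: "finite B" "card B = N - 1"
    and rel: "\<And>j. real N * esym j B mu = (real N - of_int j) * esym j A lam"
    using deriv_exists[OF A N1, of lam] by blast
  define X where "X = real N - of_int m"
  have X2: "X \<ge> 2" using m unfolding X_def by linarith
  define c1 c2 c3 where "c1 = esym (m - 1) B mu" and "c2 = esym m B mu" and "c3 = esym (m + 1) B mu"
  define s1 s2 s3 where "s1 = esym (m - 1) A lam" and "s2 = esym m A lam" and "s3 = esym (m + 1) A lam"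
  have r1: "real N * c1 = (X + 1) * s1" using rel[of "m - 1"] by (simp add: c1_def s1_def X_def)
  have r2: "real N * c2 = X * s2" using rel[of m] by (simp add: c2_def s2_def X_def)
  have r3: "real N * c3 = (X - 1) * s3" using rel[of "m + 1"] by (simp add: c3_def s3_def X_def algebra_simps)
  have cB: "real (card B) = real N - 1" using B N1 by simp
  have ih: "X * (of_int m + 1) * c1 * c3 \<le> of_int m * (X - 1) * c2\<^sup>2"
    using IH[OF B, of m] m unfolding NW_def c1_def c2_def c3_def cB X_def by (simp add: algebra_simps)
  have "real N ^ 2 * (X * (of_int m + 1) * c1 * c3) \<le> real N ^ 2 * (of_int m * (X - 1) * c2\<^sup>2)"
    by (rule mult_left_mono[OF ih]) simp
  moreover have "real N ^ 2 * (X * (of_int m + 1) * c1 * c3) = X * (of_int m + 1) * (real N * c1) * (real N * c3)"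
    by (simp add: power2_eq_square algebra_simps)
  moreover have "real N ^ 2 * (of_int m * (X - 1) * c2\<^sup>2) = of_int m * (X - 1) * (real N * c2)\<^sup>2"
    by (simp add: power2_eq_square algebra_simps)
  ultimately have "X * (of_int m + 1) * ((X + 1) * s1) * ((X - 1) * s3) \<le> of_int m * (X - 1) * (X * s2)\<^sup>2"
    unfolding r1 r2 r3 by simp
  hence "(X * (X - 1)) * ((X + 1) * (of_int m + 1) * s1 * s3) \<le> (X * (X - 1)) * (of_int m * X * s2\<^sup>2)"
    by (simp add: power2_eq_square algebra_simps)
  moreover have "X * (X - 1) > 0" using X2 by simp
  ultimately have "(X + 1) * (of_int m + 1) * s1 * s3 \<le> of_int m * X * s2\<^sup>2"
    by (rule mult_left_le_imp_le) 
  thus ?thesis unfolding NW_def s1_def s2_def s3_def X_def using A by simp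
qed

lemma esym_rev:
  "finite A \<Longrightarrow> (\<forall>i\<in>A. lam i \<noteq> 0) \<Longrightarrow>
     esym j A (\<lambda>i. 1 / lam i) * esym (int (card A)) A lam = esym (int (card A) - j) A lam"
proof (induction A arbitrary: j rule: finite_induct)
  case empty then show ?case by (simp add: esym_empty)
next
  case (insert x A)
  let ?l = "\<lambda>i. 1 / lam i"
  have x0: "lam x \<noteq> 0" using insert by simp
  have IH: "\<And>j. esym j A ?l * esym (int (card A)) A lam = esym (int (card A) - j) A lam"
    using insert by simp
  have e0: "esym (int (card A) + 1) A lam = 0" using insert by (simp add: esym_gt)
  have "esym j (insert x A) ?l * esym (int (card (insert x A))) (insert x A) lam
     = (esym j A ?l + ?l x * esym (j - 1) A ?l) * (esym (int (card A) + 1) A lam + lam x * esym (int (card A)) A lam)"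
    using insert by (simp add: esym_insert add.commute)
  also have "\<dots> = lam x * (esym j A ?l * esym (int (card A)) A lam) + (esym (j - 1) A ?l * esym (int (card A)) A lam)"
    using x0 e0 by (simp add: algebra_simps)
  also have "\<dots> = lam x * esym (int (card A) - j) A lam + esym (int (card A) - (j - 1)) A lam"
    by (simp add: IH)
  also have "\<dots> = esym (int (card (insert x A)) - j) (insert x A) lam"
    using insert by (simp add: esym_insert algebra_simps)
  finally show ?case .
qed

lemma newton_N2:
  assumes A: "finite A" "card A = 2"
  shows "NW A lam 1"
proof -
  obtain a b where ab: "A = {a, b}" "a \<noteq> b" using A(2) by (meson card_2_iff)
  have s1: "esym j {b} lam = esym j {} lam + lam b * esym (j - 1) {} lam" for j
    by (rule esym_insert) auto
  have s2: "esym j {a, b} lam = esym j {b} lam + lam a * esym (j - 1) {b} lam" for j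
    by (rule esym_insert) (use ab in auto)
  have e1: "esym 1 A lam = lam a + lam b" unfolding ab(1) s2 s1 by (simp add: esym_empty)
  have e2: "esym 2 A lam = lam a * lam b" unfolding ab(1) s2 s1 by (simp add: esym_empty)
  have e0: "esym 0 A lam = 1" using A by (simp add: esym_zero)
  have "4 * (lam a * lam b) \<le> (lam a + lam b)\<^sup>2"
    using sum_squares_ge_zero[of "lam a - lam b" 0] by (simp add: power2_eq_square algebra_simps)
  thus ?thesis unfolding NW_def using A e0 e1 e2 by simp
qed

lemma newton:
  assumes "finite A" "1 \<le> m"
  shows "NW A lam m"
proof -
  have "\<forall>A lam m. finite A \<longrightarrow> card A = N \<longrightarrow> 1 \<le> m \<longrightarrow> NW A lam m" for N
  proof (induction N rule: less_induct)
    case (less N)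
    show ?case
    proof (intro allI impI)
      fix A :: "nat set" and lam :: "nat \<Rightarrow> real" and m :: int
      assume A: "finite A" "card A = N" and m: "1 \<le> m"
      have IH: "\<And>B mu m. finite B \<Longrightarrow> card B = N - 1 \<Longrightarrow> 1 \<le> m \<Longrightarrow> NW B mu m"
        if "N \<ge> 1" for dummy :: bool
        using less that by (metis diff_less zero_less_one less_le_trans)
      consider "m \<ge> int N" | "m \<le> int N - 2" | "m = int N - 1" by linarith
      then show "NW A lam m"
      proof cases
        case 1
        have z1: "esym (m + 1) A lam = 0" using A 1 by (intro esym_gt) auto
        have z2: "of_int m * (real (card A) - of_int m) * (esym m A lam)\<^sup>2 = 0"
        proof (cases "m = int N")
          case True then show ?thesis using A by simp
        next
          case False
          hence "esym m A lam = 0" using A 1 by (intro esym_gt) auto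
          thus ?thesis by simp
        qed
        show ?thesis unfolding NW_def z1 z2 by simp
      next
        case 2
        show ?thesis by (rule newton_step[OF _ A m 2]) (use IH m 2 in auto)
      next
        case 3
        have N2: "N \<ge> 2" using m 3 by linarith
        show ?thesis
        proof (cases "N = 2")
          case True
          hence "m = 1" using 3 by simp
          thus ?thesis using newton_N2 A True by simp
        next
          case False
          hence N3: "N \<ge> 3" using N2 by simp
          show ?thesis
          proof (cases "\<exists>i\<in>A. lam i = 0")
            case True
            have "esym (int (card A)) A lam = (\<Prod>i\<in>A. lam i)" by (rule esym_card[OF A(1)])
            also have "\<dots> = 0" using True A(1) by (simp add: prod_zero_iff)
            finally have "esym (int (card A)) A lam = 0" .
            hence "esym (m + 1) A lam = 0" using 3 A by simp
            moreover have "0 \<le> of_int m * (real (card A) - of_int m) * (esym m A lam)\<^sup>2"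
              using 3 A m by simp
            ultimately show ?thesis unfolding NW_def by simp
          next
            case False
            let ?l = "\<lambda>i. 1 / lam i"
            have nz: "\<forall>i\<in>A. lam i \<noteq> 0" using False by blast
            have nw1: "NW A ?l 1"
              by (rule newton_step[OF _ A]) (use IH N3 in auto)
            define P where "P = esym (int (card A)) A lam"
            have rv: "esym j A ?l * P = esym (int N - j) A lam" for j
              using esym_rev[OF A(1) nz, of j] A by (simp add: P_def)
            have e0: "esym 0 A ?l = 1" using A by (simp add: esym_zero)
            have h: "2 * real N * esym 0 A ?l * esym 2 A ?l \<le> (real N - 1) * (esym 1 A ?l)\<^sup>2"
              using nw1 A unfolding NW_def by (simp add: algebra_simps)
            have "P\<^sup>2 * (2 * real N * esym 0 A ?l * esym 2 A ?l) \<le> P\<^sup>2 * ((real N - 1) * (esym 1 A ?l)\<^sup>2)"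
              by (rule mult_left_mono[OF h]) simp
            moreover have "P\<^sup>2 * (2 * real N * esym 0 A ?l * esym 2 A ?l)
                = 2 * real N * (esym 0 A ?l * P) * (esym 2 A ?l * P)"
              by (simp add: power2_eq_square algebra_simps)
            moreover have "P\<^sup>2 * ((real N - 1) * (esym 1 A ?l)\<^sup>2) = (real N - 1) * (esym 1 A ?l * P)\<^sup>2"
              by (simp add: power2_eq_square algebra_simps)
            ultimately have "2 * real N * esym (int N) A lam * esym (int N - 2) A lam
                 \<le> (real N - 1) * (esym (int N - 1) A lam)\<^sup>2"
              unfolding rv by simp
            moreover have "(real (card A) - of_int m + 1) * (of_int m + 1) * esym (m - 1) A lam * esym (m + 1) A lam
                = 2 * real N * esym (int N) A lam * esym (int N - 2) A lam"
            proof -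
              have e: "m - 1 = int N - 2" "m + 1 = int N" and o: "real_of_int m = real N - 1" using 3 by auto
              show ?thesis unfolding e o using A by simp
            qed
            moreover have "of_int m * (real (card A) - of_int m) * (esym m A lam)\<^sup>2
                = (real N - 1) * (esym (int N - 1) A lam)\<^sup>2"
            proof -
              have "of_int m = real N - 1" using 3 by auto
              thus ?thesis using A 3 by simp
            qed
            ultimately show ?thesis unfolding NW_def by simp
          qed
        qed
      qed
    qed
  qed
  thus ?thesis using assms by blast
qed

lemma weak_newton:
  assumes A: "finite A" and m: "1 \<le> m"
  shows "esym (m - 1) A lam * esym (m + 1) A lam \<le> (esym m A lam)\<^sup>2"
proof (cases "esym (m - 1) A lam * esym (m + 1) A lam \<le> 0")
  case True
  then show ?thesis by (smt (verit) zero_le_power2)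
next
  case False
  hence pos: "esym (m - 1) A lam * esym (m + 1) A lam > 0" by simp
  hence "esym (m + 1) A lam \<noteq> 0" by auto
  hence "m + 1 \<le> int (card A)" using esym_gt[OF A, of "m+1" lam] by linarith
  define a where "a = of_int m * (real (card A) - of_int m)"
  define b where "b = (real (card A) - of_int m + 1) * (of_int m + 1)"
  have apos: "a > 0" unfolding a_def using m \<open>m + 1 \<le> int (card A)\<close> by simp
  have ab: "b \<ge> a" unfolding a_def b_def using m \<open>m + 1 \<le> int (card A)\<close>
    by (simp add: algebra_simps)
  have nw: "b * (esym (m - 1) A lam * esym (m + 1) A lam) \<le> a * (esym m A lam)\<^sup>2"
    using newton[OF A m, of lam] unfolding NW_def a_def b_def by (simp add: algebra_simps)
  have "a * (esym (m - 1) A lam * esym (m + 1) A lam) \<le> b * (esym (m - 1) A lam * esym (m + 1) A lam)"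
    using ab pos by (intro mult_right_mono) auto
  with nw have "a * (esym (m - 1) A lam * esym (m + 1) A lam) \<le> a * (esym m A lam)\<^sup>2" by linarith
  thus ?thesis using apos by (simp add: mult_le_cancel_left_pos)
qed



lemma esym_pos_prev:
  assumes "finite A" "\<forall>m. 1 \<le> m \<longrightarrow> m < j \<longrightarrow> esym m A lam > 0" "0 \<le> k" "k < j"
  shows "esym k A lam > 0"
proof (cases "k = 0")
  case True then show ?thesis using assms by (simp add: esym_zero)
next
  case False then show ?thesis using assms by auto
qed

lemma esym_nonneg_prev:
  assumes "finite A" "\<forall>m. 1 \<le> m \<longrightarrow> m < j \<longrightarrow> esym m A lam > 0" "k < j"
  shows "esym k A lam \<ge> 0"
proof (cases "k < 0")
  case True then show ?thesis by (simp add: esym_neg)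
next
  case False then show ?thesis using esym_pos_prev[OF assms(1,2), of k] assms by simp
qed

lemma gnm:
  assumes A: "finite A" and ij: "1 \<le> i" "i \<le> j"
    and pos: "\<forall>m. 1 \<le> m \<longrightarrow> m < j \<longrightarrow> esym m A lam > 0"
  shows "esym j A lam * esym (i - 1) A lam * (real (card A) - of_int i + 1) * of_int j
         \<le> esym i A lam * esym (j - 1) A lam * of_int i * (real (card A) - of_int j + 1)"
  using ij(2) pos
proof (induction j rule: int_ge_induct)
  case base
  then show ?case by (simp add: algebra_simps)
next
  case (step j)
  define N where "N = real (card A)"
  define X Y Z W V where "X = esym (j + 1) A lam" and "Y = esym j A lam" and "Z = esym (j - 1) A lam"
    and "W = esym (i - 1) A lam" and "V = esym i A lam"
  have pos': "\<forall>m. 1 \<le> m \<longrightarrow> m < j \<longrightarrow> esym m A lam > 0" using step by auto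
  have IH: "Y * W * (N - of_int i + 1) * of_int j \<le> V * Z * of_int i * (N - of_int j + 1)"
    using step.IH[OF pos'] by (simp add: X_def Y_def Z_def W_def V_def N_def)
  have Yp: "Y > 0" unfolding Y_def using step ij by auto
  have Zp: "Z > 0" unfolding Z_def using esym_pos_prev[OF A step.prems, of "j - 1"] step ij by simp
  have Wn: "W \<ge> 0" unfolding W_def using esym_nonneg_prev[OF A step.prems, of "i - 1"] step by simp
  have Vp: "V > 0" unfolding V_def using step ij by auto
  have jN: "of_int j \<le> N"
  proof -
    have "j \<le> int (card A)" using Yp esym_gt[OF A, of j lam] unfolding Y_def by force
    thus ?thesis unfolding N_def by simp
  qed
  have nw: "(N - of_int j + 1) * (of_int j + 1) * Z * X \<le> of_int j * (N - of_int j) * Y\<^sup>2"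
    using newton[OF A, of j lam] step ij unfolding NW_def N_def X_def Y_def Z_def by simp
  define c where "c = (N - of_int j + 1) * Z * of_int j"
  have cp: "c > 0" unfolding c_def using Zp jN step ij by simp
  have f1: "W * (N - of_int i + 1) * of_int j \<ge> 0" using Wn jN step ij by simp
  have f2: "of_int j * (N - of_int j) * Y \<ge> 0" using Yp jN step ij by simp
  have "c * (X * W * (N - of_int i + 1) * (of_int j + 1))
      = (W * (N - of_int i + 1) * of_int j) * ((N - of_int j + 1) * (of_int j + 1) * Z * X)"
    unfolding c_def by (simp add: algebra_simps)
  also have "\<dots> \<le> (W * (N - of_int i + 1) * of_int j) * (of_int j * (N - of_int j) * Y\<^sup>2)"
    by (rule mult_left_mono[OF nw f1])
  also have "\<dots> = (of_int j * (N - of_int j) * Y) * (Y * W * (N - of_int i + 1) * of_int j)"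
    by (simp add: power2_eq_square algebra_simps)
  also have "\<dots> \<le> (of_int j * (N - of_int j) * Y) * (V * Z * of_int i * (N - of_int j + 1))"
    by (rule mult_left_mono[OF IH f2])
  also have "\<dots> = c * (V * Y * of_int i * (N - of_int (j + 1) + 1))"
    unfolding c_def by (simp add: algebra_simps)
  finally have "X * W * (N - of_int i + 1) * (of_int j + 1) \<le> V * Y * of_int i * (N - of_int (j + 1) + 1)"
    using cp by (simp add: mult_le_cancel_left_pos)
  thus ?case by (simp add: X_def Y_def W_def V_def N_def)
qed

lemma ratio:
  assumes A: "finite A" and ij: "0 \<le> i" "i \<le> j"
    and pos: "\<forall>m. 1 \<le> m \<longrightarrow> m < j \<longrightarrow> esym m A lam > 0"
  shows "esym j A lam * esym (i - 1) A lam \<le> esym i A lam * esym (j - 1) A lam"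
proof -
  consider "i = 0" | "i = j" | "1 \<le> i \<and> i < j" using ij by linarith
  then show ?thesis
  proof cases
    case 1
    have "esym (j - 1) A lam \<ge> 0" by (rule esym_nonneg_prev[OF A pos]) simp
    then show ?thesis using 1 A by (simp add: esym_neg esym_zero)
  next
    case 2 then show ?thesis by (simp add: mult.commute)
  next
    case 3
    define N where "N = real (card A)"
    define R where "R = esym i A lam * esym (j - 1) A lam"
    have Rn: "R \<ge> 0" unfolding R_def using pos 3 by (intro mult_nonneg_nonneg less_imp_le) auto
    have jN: "of_int j \<le> N + 1"
    proof -
      have "esym (j - 1) A lam > 0" using pos 3 by auto
      hence "j - 1 \<le> int (card A)" using esym_gt[OF A, of "j - 1" lam] by force
      thus ?thesis unfolding N_def by simp
    qed
    define al be where "al = (N - of_int i + 1) * of_int j" and "be = of_int i * (N - of_int j + 1)"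
    have alp: "al > 0" unfolding al_def using 3 jN by simp
    have be0: "be \<ge> 0" unfolding be_def using 3 jN by simp
    have beal: "be \<le> al"
    proof -
      have "of_int i * (N + 1) \<le> of_int j * (N + 1)" using 3 by (intro mult_right_mono) (auto simp: N_def)
      thus ?thesis unfolding al_def be_def by (simp add: algebra_simps)
    qed
    have g: "esym j A lam * esym (i - 1) A lam * al \<le> R * be"
      using gnm[OF A _ _ pos, of i] 3 unfolding al_def be_def R_def N_def by (simp add: algebra_simps)
    also have "R * be \<le> R * al" by (rule mult_left_mono[OF beal Rn])
    finally have "al * (esym j A lam * esym (i - 1) A lam) \<le> al * R" by (simp add: mult_ac)
    thus ?thesis using alp unfolding R_def by (simp add: mult_le_cancel_left_pos)
  qed
qed

lemma del_step:
  fixes a b c x :: real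
  assumes a: "a > 0" and h1: "b + x * a > 0" and h2: "c + x * b > 0" and nw: "a * c \<le> b\<^sup>2"
  shows "b > 0"
proof (rule ccontr)
  assume "\<not> b > 0"
  define u where "u = - b"
  have u0: "u \<ge> 0" using \<open>\<not> b > 0\<close> by (simp add: u_def)
  have xa: "x * a > u" using h1 by (simp add: u_def)
  have cxu: "c > x * u" using h2 by (simp add: u_def)
  have "a * c > a * (x * u)" using cxu a by simp
  moreover have "a * (x * u) = (x * a) * u" by simp
  moreover have "(x * a) * u \<ge> u * u" using xa u0 by (intro mult_right_mono) auto
  ultimately have "a * c > u * u" by linarith
  moreover have "b\<^sup>2 = u * u" by (simp add: u_def power2_eq_square)
  ultimately show False using nw by linarith
qed

lemma gamma_del:
  assumes A: "finite A" and x: "x \<in> A"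
    and pos: "\<forall>m. 1 \<le> m \<longrightarrow> m \<le> K \<longrightarrow> esym m A lam > 0"
  shows "\<forall>m. 1 \<le> m \<longrightarrow> m \<le> K - 1 \<longrightarrow> esym m (A - {x}) lam > 0"
proof -
  define C where "C = A - {x}"
  have fC: "finite C" using A by (simp add: C_def)
  have rem: "\<And>j. esym j A lam = esym j C lam + lam x * esym (j - 1) C lam"
    unfolding C_def by (rule esym_remove[OF A x])
  have core: "esym j C lam > 0" if j1: "1 \<le> j" and jK: "j \<le> K - 1" and prev: "esym (j - 1) C lam > 0" for j
  proof (rule del_step[OF prev])
    show "esym j C lam + lam x * esym (j - 1) C lam > 0" using rem[of j] pos[rule_format, of j] j1 jK by simp
    show "esym (j + 1) C lam + lam x * esym j C lam > 0" using rem[of "j + 1"] pos[rule_format, of "j + 1"] j1 jK by simp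
    show "esym (j - 1) C lam * esym (j + 1) C lam \<le> (esym j C lam)\<^sup>2"
      by (rule weak_newton[OF fC j1])
  qed
  have "\<forall>n::nat. int n + 1 \<le> K - 1 \<longrightarrow> esym (int n + 1) C lam > 0"
  proof
    fix n :: nat
    show "int n + 1 \<le> K - 1 \<longrightarrow> esym (int n + 1) C lam > 0"
    proof (induction n)
      case 0
      show ?case using core[of 1] fC by (simp add: esym_zero)
    next
      case (Suc n)
      show ?case
      proof
        assume "int (Suc n) + 1 \<le> K - 1"
        hence p: "esym (int n + 1) C lam > 0" using Suc by simp
        have e: "int (Suc n) + 1 - 1 = int n + 1" by simp
        show "esym (int (Suc n) + 1) C lam > 0"
          by (rule core) (use \<open>int (Suc n) + 1 \<le> K - 1\<close> p e in \<open>auto simp: add.commute\<close>)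
      qed
    qed
  qed
  show ?thesis
  proof (intro allI impI)
    fix m :: int assume m: "1 \<le> m" "m \<le> K - 1"
    have "m = int (nat (m - 1)) + 1" using m by simp
    thus "esym m (A - {x}) lam > 0"
      using \<open>\<forall>n::nat. _\<close>[rule_format, of "nat (m - 1)"] m by (simp add: C_def)
  qed
qed



lemma alg1:
  fixes ck1 ck cl cl1 bk2 bl2 x :: real
  assumes "ck1 > 0" "ck + x * ck1 > 0" "cl1 * bk2 - ck1 * bl2 \<ge> 0" "bk2 \<ge> 0" "ck * cl1 \<le> cl * ck1"
  shows "(cl + x * cl1) * bk2 - (ck + x * ck1) * bl2 \<ge> 0"
proof -
  define U where "U = cl1 * bk2 - ck1 * bl2"
  have "(x * ck1) * U \<ge> (- ck) * U" using assms by (intro mult_right_mono) (auto simp: U_def)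
  moreover have "bk2 * (cl * ck1 - ck * cl1) \<ge> 0" using assms by simp
  moreover have "ck1 * ((cl + x * cl1) * bk2 - (ck + x * ck1) * bl2)
      = ck1 * cl * bk2 - ck1 * ck * bl2 + (x * ck1) * U" by (simp add: U_def algebra_simps)
  moreover have "ck1 * cl * bk2 - ck1 * ck * bl2 + (- ck) * U = bk2 * (cl * ck1 - ck * cl1)"
    by (simp add: U_def algebra_simps)
  ultimately have "ck1 * ((cl + x * cl1) * bk2 - (ck + x * ck1) * bl2) \<ge> 0" by linarith
  thus ?thesis using assms(1) by (simp add: zero_le_mult_iff)
qed

definition NN :: "nat set \<Rightarrow> int \<Rightarrow> int \<Rightarrow> (nat \<Rightarrow> real) \<Rightarrow> nat \<Rightarrow> real" where
  "NN A k l lam i = esym l A lam * esym (k - 1) (A - {i}) lam - esym k A lam * esym (l - 1) (A - {i}) lam"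

lemma part1:
  assumes A: "finite A" and ij: "i \<in> A" "j \<in> A" and lk: "0 \<le> l" "l < k"
    and pos: "\<forall>m. 1 \<le> m \<longrightarrow> m \<le> k \<longrightarrow> esym m A lam > 0"
    and le: "lam i \<le> lam j"
  shows "NN A k l lam j \<le> NN A k l lam i"
proof (cases "i = j")
  case True then show ?thesis by simp
next
  case False
  define C where "C = A - {i}"
  define D where "D = A - {j}"
  define B where "B = C - {j}"
  have BD: "D - {i} = B" unfolding B_def C_def D_def by auto
  have fC: "finite C" "finite D" "finite B" using A by (auto simp: C_def D_def B_def)
  have jC: "j \<in> C" using ij False by (simp add: C_def)
  have iD: "i \<in> D" using ij False by (simp add: D_def)
  define x y where "x = lam i" and "y = lam j"
  define s c d b where "s m = esym m A lam" and "c m = esym m C lam" and "d m = esym m D lam"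
    and "b m = esym m B lam" for m
  have hs: "s m = c m + x * c (m - 1)" for m
    unfolding s_def c_def x_def C_def by (rule esym_remove[OF A ij(1)])
  have hc: "c m = b m + y * b (m - 1)" for m
    unfolding c_def b_def y_def B_def by (rule esym_remove[OF fC(1) jC])
  have hd: "d m = b m + x * b (m - 1)" for m
    unfolding d_def b_def x_def BD[symmetric] by (rule esym_remove[OF fC(2) iD])
  have posC: "\<forall>m. 1 \<le> m \<longrightarrow> m \<le> k - 1 \<longrightarrow> esym m C lam > 0"
    unfolding C_def by (rule gamma_del[OF A ij(1) pos])
  have posB: "\<forall>m. 1 \<le> m \<longrightarrow> m \<le> k - 1 - 1 \<longrightarrow> esym m B lam > 0"
    unfolding B_def by (rule gamma_del[OF fC(1) jC posC])
  have posC': "\<forall>m. 1 \<le> m \<longrightarrow> m < k \<longrightarrow> esym m C lam > 0" using posC by auto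
  have posB': "\<forall>m. 1 \<le> m \<longrightarrow> m < k - 1 \<longrightarrow> esym m B lam > 0" using posB by auto
  have ck1: "c (k - 1) > 0" unfolding c_def by (rule esym_pos_prev[OF fC(1) posC']) (use lk in auto)
  have sk: "s k > 0" unfolding s_def using pos lk by auto
  have bk2: "b (k - 1 - 1) \<ge> 0" unfolding b_def by (rule esym_nonneg_prev[OF fC(3) posB']) simp
  have V: "c k * c (l - 1) \<le> c l * c (k - 1)"
    unfolding c_def by (rule ratio[OF fC(1) _ _ posC']) (use lk in auto)
  have U: "b (l - 1) * b (k - 1 - 1) - b (k - 1) * b (l - 1 - 1) \<ge> 0"
  proof (cases "l = 0")
    case True then show ?thesis using bk2 by (simp add: b_def esym_neg)
  next
    case False
    have "b (k - 1) * b (l - 1 - 1) \<le> b (l - 1) * b (k - 1 - 1)"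
      unfolding b_def by (rule ratio[OF fC(3) _ _ posB']) (use lk False in auto)
    thus ?thesis by simp
  qed
  have U': "c (l - 1) * b (k - 1 - 1) - c (k - 1) * b (l - 1 - 1) \<ge> 0"
    using U unfolding hc by (simp add: algebra_simps)
  have E: "(c l + x * c (l - 1)) * b (k - 1 - 1) - (c k + x * c (k - 1)) * b (l - 1 - 1) \<ge> 0"
    by (rule alg1[OF ck1 _ U' bk2 V]) (use sk hs[of k] in simp)
  have diff: "NN A k l lam i - NN A k l lam j
      = (y - x) * ((c l + x * c (l - 1)) * b (k - 1 - 1) - (c k + x * c (k - 1)) * b (l - 1 - 1))"
  proof -
    have "NN A k l lam i - NN A k l lam j = s l * (c (k - 1) - d (k - 1)) - s k * (c (l - 1) - d (l - 1))"
      unfolding NN_def s_def c_def d_def C_def D_def by (simp add: algebra_simps)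
    also have "\<dots> = (y - x) * (s l * b (k - 1 - 1) - s k * b (l - 1 - 1))"
      unfolding hc hd by (simp add: algebra_simps)
    also have "\<dots> = (y - x) * ((c l + x * c (l - 1)) * b (k - 1 - 1) - (c k + x * c (k - 1)) * b (l - 1 - 1))"
      unfolding hs by simp
    finally show ?thesis .
  qed
  have "y - x \<ge> 0" using le by (simp add: x_def y_def)
  hence "NN A k l lam i - NN A k l lam j \<ge> 0" unfolding diff using E by simp
  thus ?thesis by simp
qed



lemma S_bound:
  fixes nr kr lr c t al2 al1 al ak2 ak1 ak :: real
  assumes r: "0 \<le> lr" "lr + 1 \<le> kr" "kr + 2 \<le> nr" "(nr - kr) * (nr - lr) \<ge> nr + 1" "c * nr = 1" "c \<le> 1"
    and nn: "al2 \<ge> 0" "al1 \<ge> 0" "al \<ge> 0" "ak2 \<ge> 0" "ak1 \<ge> 0" "t \<ge> 0"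
    and z: "lr < 2 \<Longrightarrow> al2 = 0" "lr < 1 \<Longrightarrow> al1 = 0"
    and G1: "ak1 * al2 * (nr - lr + 1) * (kr - 1) \<le> al1 * ak2 * (lr - 1) * (nr - kr + 1)"
    and G2: "ak1 * al1 * (nr - lr) * (kr - 1) \<le> al * ak2 * lr * (nr - kr + 1)"
    and G3: "ak * al2 * (nr - lr + 1) * kr \<le> al1 * ak1 * (lr - 1) * (nr - kr)"
    and G4: "ak * al1 * (nr - lr) * kr \<le> al * ak1 * lr * (nr - kr)"
  shows "(2 + c) * ((al + t * al1) * ak1 - (ak + t * ak1) * al1)
     \<le> (al + t * al1) * (nr - kr + 1) * (ak1 + t * ak2) - (ak + t * ak1) * (nr - lr + 1) * (al1 + t * al2)"
proof -
  define S0 where "S0 = (nr - kr + 1) * al * ak1 - (nr - lr + 1) * ak * al1"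
  define S1 where "S1 = (nr - kr + 1) * al * ak2 - (nr - lr + 1) * ak * al2 - (kr - lr) * al1 * ak1"
  define S2 where "S2 = (nr - kr + 1) * al1 * ak2 - (nr - lr + 1) * ak1 * al2"
  define D where "D = al * ak1 - ak * al1"
  have eqS: "(al + t * al1) * (nr - kr + 1) * (ak1 + t * ak2) - (ak + t * ak1) * (nr - lr + 1) * (al1 + t * al2)
      = S0 + t * S1 + t\<^sup>2 * S2"
    unfolding S0_def S1_def S2_def by (simp add: power2_eq_square algebra_simps)
  have eqD: "(al + t * al1) * ak1 - (ak + t * ak1) * al1 = D" unfolding D_def by (simp add: algebra_simps)
  have S2: "S2 \<ge> 0"
  proof (cases "kr > 1")
    case True
    have e1: "(kr - 1) * S2 = (kr - 1) * (nr - kr + 1) * al1 * ak2 - ak1 * al2 * (nr - lr + 1) * (kr - 1)"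
      unfolding S2_def by (simp add: algebra_simps)
    have e2: "(kr - 1) * (nr - kr + 1) * al1 * ak2 - al1 * ak2 * (lr - 1) * (nr - kr + 1)
        = (kr - lr) * (nr - kr + 1) * (al1 * ak2)" by (simp add: algebra_simps)
    have e3: "(kr - lr) * (nr - kr + 1) * (al1 * ak2) \<ge> 0" using r nn by simp
    have "(kr - 1) * S2 \<ge> 0" using e1 e2 e3 G1 by linarith
    thus ?thesis using True by (simp add: zero_le_mult_iff)
  next
    case False
    hence "lr < 1" using r by linarith
    hence "al1 = 0" "al2 = 0" using z by auto
    thus ?thesis unfolding S2_def by simp
  qed
  have S1: "S1 \<ge> 0"
  proof (cases "lr \<ge> 1")
    case True
    define P where "P = al1 * ak1"
    have P0: "P \<ge> 0" unfolding P_def using nn by simp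
    have h2: "kr * (ak1 * al1 * (nr - lr) * (kr - 1)) \<le> kr * (al * ak2 * lr * (nr - kr + 1))"
      using G2 r by (intro mult_left_mono) auto
    have h3: "lr * (ak * al2 * (nr - lr + 1) * kr) \<le> lr * (al1 * ak1 * (lr - 1) * (nr - kr))"
      using G3 r by (intro mult_left_mono) auto
    have poly: "(nr - kr) * (kr * (kr - 1) - lr * (lr - 1)) + kr * (kr - lr) * (kr - 1 - lr) \<ge> 0"
    proof -
      have "kr * (kr - 1) - lr * (lr - 1) = (kr - lr) * (kr + lr - 1)" by (simp add: algebra_simps)
      also have "\<dots> \<ge> 0" using r True by simp
      finally have a: "kr * (kr - 1) - lr * (lr - 1) \<ge> 0" .
      have b: "kr * (kr - lr) * (kr - 1 - lr) \<ge> 0" using r by simp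
      have "(nr - kr) * (kr * (kr - 1) - lr * (lr - 1)) \<ge> 0" using a r by simp
      thus ?thesis using b by linarith
    qed
    have e1: "lr * kr * S1 = kr * (lr * (nr - kr + 1) * al * ak2) - lr * (kr * (nr - lr + 1) * ak * al2)
         - lr * kr * (kr - lr) * P"
      unfolding S1_def P_def by (simp add: algebra_simps)
    have h2': "kr * (ak1 * al1 * (nr - lr) * (kr - 1)) \<le> kr * (lr * (nr - kr + 1) * al * ak2)"
      using h2 by (simp add: algebra_simps)
    have h3': "lr * (kr * (nr - lr + 1) * ak * al2) \<le> lr * (al1 * ak1 * (lr - 1) * (nr - kr))"
      using h3 by (simp add: algebra_simps)
    have e2: "kr * (ak1 * al1 * (nr - lr) * (kr - 1)) - lr * (al1 * ak1 * (lr - 1) * (nr - kr))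
         - lr * kr * (kr - lr) * P
         = P * ((nr - kr) * (kr * (kr - 1) - lr * (lr - 1)) + kr * (kr - lr) * (kr - 1 - lr))"
      unfolding P_def by (simp add: algebra_simps)
    have e3: "P * ((nr - kr) * (kr * (kr - 1) - lr * (lr - 1)) + kr * (kr - lr) * (kr - 1 - lr)) \<ge> 0"
      using P0 poly by simp
    have "(lr * kr) * S1 \<ge> 0" using e1 h2' h3' e2 e3 by linarith
    moreover have "lr * kr > 0" using True r by simp
    ultimately show ?thesis by (simp add: zero_le_mult_iff)
  next
    case False
    hence "al1 = 0" "al2 = 0" using z by auto
    thus ?thesis unfolding S1_def using r nn by simp
  qed
  have S0: "S0 - (2 + c) * D \<ge> 0"
  proof -
    define Q where "Q = al * ak1"
    have Q0: "Q \<ge> 0" unfolding Q_def using nn by simp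
    have cc: "nr - lr - 1 - c \<ge> 0" using r by linarith
    have h4: "(nr - lr - 1 - c) * (ak * al1 * (nr - lr) * kr) \<le> (nr - lr - 1 - c) * (al * ak1 * lr * (nr - kr))"
      using G4 cc by (rule mult_left_mono)
    have e1: "kr * (nr - lr) * (S0 - (2 + c) * D)
        = kr * (nr - lr) * (nr - kr - 1 - c) * Q - (nr - lr - 1 - c) * (ak * al1 * (nr - lr) * kr)"
      unfolding S0_def D_def Q_def by (simp add: algebra_simps)
    have e2: "kr * (nr - lr) * (nr - kr - 1 - c) * Q - (nr - lr - 1 - c) * (al * ak1 * lr * (nr - kr))
        = Q * ((kr - lr) * ((nr - kr) * (nr - lr) - nr) - (c * nr) * (kr - lr))"
      unfolding Q_def by (simp add: algebra_simps)
    have e3: "Q * ((kr - lr) * ((nr - kr) * (nr - lr) - nr) - (c * nr) * (kr - lr))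
        = Q * ((kr - lr) * ((nr - kr) * (nr - lr) - nr - 1))"
      using r by (simp add: algebra_simps)
    have e4: "Q * ((kr - lr) * ((nr - kr) * (nr - lr) - nr - 1)) \<ge> 0" using Q0 r by simp
    have "(kr * (nr - lr)) * (S0 - (2 + c) * D) \<ge> 0" using e1 e2 e3 e4 h4 by linarith
    moreover have "kr * (nr - lr) > 0" using r by simp
    ultimately show ?thesis by (simp add: zero_le_mult_iff)
  qed
  have "t * S1 \<ge> 0" "t\<^sup>2 * S2 \<ge> 0" using S1 S2 nn by simp_all
  thus ?thesis unfolding eqS eqD using S0 by linarith
qed



lemma part2:
  assumes A: "finite A" "card A = n" and one: "x \<in> A" and lk: "0 \<le> l" "l < k" "k \<le> int n"
    and pos: "\<forall>m. 1 \<le> m \<longrightarrow> m \<le> k \<longrightarrow> esym m A lam > 0" and t: "lam x > 0"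
    and nk: "int n - k \<ge> 2" and big: "(int n - k) * (int n - l) \<ge> int n + 1"
  shows "(2 + 1 / real n) * NN A k l lam x \<le> (\<Sum>i\<in>A. NN A k l lam i)"
proof -
  define a where "a = A - {x}"
  have fa: "finite a" using A by (simp add: a_def)
  have n1: "n \<ge> 1" using lk by linarith
  have ca: "real (card a) = real n - 1" using A one n1 by (simp add: a_def)
  have posa: "\<forall>m. 1 \<le> m \<longrightarrow> m \<le> k - 1 \<longrightarrow> esym m a lam > 0"
    unfolding a_def by (rule gamma_del[OF A(1) one pos])
  have posa': "\<forall>m. 1 \<le> m \<longrightarrow> m < k \<longrightarrow> esym m a lam > 0" using posa by auto
  define s where "s m = esym m A lam" for m
  define e where "e m = esym m a lam" for m
  have hs: "s m = e m + lam x * e (m - 1)" for m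
    unfolding s_def e_def a_def by (rule esym_remove[OF A(1) one])
  have nn: "e m \<ge> 0" if "m < k" for m unfolding e_def by (rule esym_nonneg_prev[OF fa posa' that])
  have ez: "e m = 0" if "m < 0" for m unfolding e_def using that by (simp add: esym_neg)
  define nr kr lr where "nr = real n" and "kr = real_of_int k" and "lr = real_of_int l"
  have sum_eq: "(\<Sum>i\<in>A. NN A k l lam i)
      = s l * ((nr - kr + 1) * s (k - 1)) - s k * ((nr - lr + 1) * s (l - 1))"
  proof -
    have "(\<Sum>i\<in>A. NN A k l lam i) = s l * (\<Sum>i\<in>A. esym (k - 1) (A - {i}) lam)
        - s k * (\<Sum>i\<in>A. esym (l - 1) (A - {i}) lam)"
      unfolding NN_def s_def by (simp add: sum_subtractf sum_distrib_left)
    also have "\<dots> = s l * ((nr - kr + 1) * s (k - 1)) - s k * ((nr - lr + 1) * s (l - 1))"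
      unfolding sum_del[OF A(1)] using A by (simp add: s_def nr_def kr_def lr_def algebra_simps)
    finally show ?thesis .
  qed
  have N1: "NN A k l lam x = s l * e (k - 1) - s k * e (l - 1)"
    unfolding NN_def s_def e_def a_def ..
  have G: "e j * e (i - 1) * (nr - of_int i) * of_int j \<le> e i * e (j - 1) * of_int i * (nr - of_int j)"
    if "1 \<le> i" "i \<le> j" "j \<le> k" for i j
  proof -
    have p: "\<forall>m. 1 \<le> m \<longrightarrow> m < j \<longrightarrow> esym m a lam > 0" using posa' that by auto
    show ?thesis using gnm[OF fa that(1,2) p] ca unfolding e_def nr_def by (simp add: algebra_simps)
  qed
  have G1: "e (k - 1) * e (l - 1 - 1) * (nr - lr + 1) * (kr - 1) \<le> e (l - 1) * e (k - 1 - 1) * (lr - 1) * (nr - kr + 1)"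
  proof (cases "l \<ge> 2")
    case True
    show ?thesis using G[of "l - 1" "k - 1"] True lk unfolding lr_def kr_def by (simp add: algebra_simps)
  next
    case False
    hence z: "e (l - 1 - 1) = 0" by (intro ez) simp
    have w: "e (l - 1) * (lr - 1) = 0"
    proof (cases "l = 1")
      case True then show ?thesis by (simp add: lr_def)
    next
      case False
      hence "l = 0" using \<open>\<not> l \<ge> 2\<close> lk by simp
      then show ?thesis using ez[of "l - 1"] by simp
    qed
    have m: "e (l - 1) * e (k - 1 - 1) * (lr - 1) * (nr - kr + 1)
        = (e (l - 1) * (lr - 1)) * (e (k - 1 - 1) * (nr - kr + 1))" by (simp add: mult_ac)
    show ?thesis unfolding m w z by simp
  qed
  have G2: "e (k - 1) * e (l - 1) * (nr - lr) * (kr - 1) \<le> e l * e (k - 1 - 1) * lr * (nr - kr + 1)"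
  proof (cases "l \<ge> 1")
    case True
    show ?thesis using G[of l "k - 1"] True lk unfolding lr_def kr_def by (simp add: algebra_simps)
  next
    case False
    hence "l = 0" using lk by simp
    then show ?thesis using ez[of "l - 1"] by (simp add: lr_def)
  qed
  have G3: "e k * e (l - 1 - 1) * (nr - lr + 1) * kr \<le> e (l - 1) * e (k - 1) * (lr - 1) * (nr - kr)"
  proof (cases "l \<ge> 2")
    case True
    show ?thesis using G[of "l - 1" k] True lk unfolding lr_def kr_def by (simp add: algebra_simps)
  next
    case False
    hence z: "e (l - 1 - 1) = 0" by (intro ez) simp
    have w: "e (l - 1) * (lr - 1) = 0"
    proof (cases "l = 1")
      case True then show ?thesis by (simp add: lr_def)
    next
      case False
      hence "l = 0" using \<open>\<not> l \<ge> 2\<close> lk by simp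
      then show ?thesis using ez[of "l - 1"] by simp
    qed
    have m: "e (l - 1) * e (k - 1) * (lr - 1) * (nr - kr)
        = (e (l - 1) * (lr - 1)) * (e (k - 1) * (nr - kr))" by (simp add: mult_ac)
    show ?thesis unfolding m w z by simp
  qed
  have G4: "e k * e (l - 1) * (nr - lr) * kr \<le> e l * e (k - 1) * lr * (nr - kr)"
  proof (cases "l \<ge> 1")
    case True
    show ?thesis using G[of l k] True lk unfolding lr_def kr_def by (simp add: algebra_simps)
  next
    case False
    hence "l = 0" using lk by simp
    then show ?thesis using ez[of "l - 1"] by (simp add: lr_def)
  qed
  have r: "0 \<le> lr" "lr + 1 \<le> kr" "kr + 2 \<le> nr" "(nr - kr) * (nr - lr) \<ge> nr + 1"
    "(1 / nr) * nr = 1" "1 / nr \<le> 1"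
  proof -
    show "0 \<le> lr" "lr + 1 \<le> kr" "kr + 2 \<le> nr" using lk nk unfolding lr_def kr_def nr_def by simp_all
    have "real_of_int ((int n - k) * (int n - l)) \<ge> real_of_int (int n + 1)" using big by linarith
    thus "(nr - kr) * (nr - lr) \<ge> nr + 1" unfolding lr_def kr_def nr_def by simp
    show "(1 / nr) * nr = 1" "1 / nr \<le> 1" using n1 unfolding nr_def by simp_all
  qed
  have z1: "e (l - 1 - 1) = 0" if "lr < 2" using that ez unfolding lr_def by simp
  have z2: "e (l - 1) = 0" if "lr < 1" using that ez unfolding lr_def by simp
  note SB = S_bound[OF r nn[of "l - 1 - 1"] nn[of "l - 1"] nn[of l] nn[of "k - 1 - 1"] nn[of "k - 1"]
      _ z1 z2 G1 G2 G3 G4, of "lam x"]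
  have main: "(2 + 1 / nr) * ((e l + lam x * e (l - 1)) * e (k - 1) - (e k + lam x * e (k - 1)) * e (l - 1))
     \<le> (e l + lam x * e (l - 1)) * (nr - kr + 1) * (e (k - 1) + lam x * e (k - 1 - 1))
       - (e k + lam x * e (k - 1)) * (nr - lr + 1) * (e (l - 1) + lam x * e (l - 1 - 1))"
    by (rule SB) (use lk t in auto)
  show ?thesis
    unfolding sum_eq N1 using main unfolding hs[of l] hs[of k] hs[of "k - 1"] hs[of "l - 1"] nr_def
    by (simp add: algebra_simps)
qed



lemma Fstar_nonneg: "Fstar n k l lam \<ge> 0"
  unfolding Fstar_def by (intro mult_nonneg_nonneg) simp_all

lemma Fii_NN: "Fii n k l lam i = Fstar n k l lam * NN {1..n} (int k) (int l) lam i"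
  unfolding Fii_def NN_def sigma_def sigma_del_def ..

lemma gamma_pos:
  assumes "lam \<in> Gamma_plus n k"
  shows "\<forall>m. 1 \<le> m \<longrightarrow> m \<le> int k \<longrightarrow> esym m {1..n} lam > 0"
proof (intro allI impI)
  fix m :: int assume m: "1 \<le> m" "m \<le> int k"
  have "nat m \<in> {1..k}" using m by auto
  hence "sigma n (int (nat m)) lam > 0" using assms unfolding Gamma_plus_def by blast
  moreover have "int (nat m) = m" using m by simp
  ultimately show "esym m {1..n} lam > 0" by (simp add: sigma_def)
qed

lemma cond_arith:
  fixes n k l :: nat
  assumes "l < k" "k \<le> n" "real (n - k + 1) * real (n - l + 1) > 2 * real (n + 1)"
  shows "int n - int k \<ge> 2" "(int n - int k) * (int n - int l) \<ge> int n + 1"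
proof -
  define p q where "p = n - k" and "q = n - l"
  have pq: "p < q" "q \<le> n" using assms by (auto simp: p_def q_def)
  have h: "(p + 1) * (q + 1) > 2 * (n + 1)"
  proof -
    have "real (n - k + 1) = real (p + 1)" "real (n - l + 1) = real (q + 1)" by (simp_all add: p_def q_def)
    hence "real ((p + 1) * (q + 1)) > real (2 * (n + 1))" using assms(3) by (simp only: of_nat_mult)
    thus ?thesis by (simp only: of_nat_less_iff)
  qed
  have p2: "p \<ge> 2"
  proof (rule ccontr)
    assume "\<not> p \<ge> 2"
    hence "p + 1 \<le> 2" by simp
    hence "(p + 1) * (q + 1) \<le> 2 * (q + 1)" by (intro mult_right_mono) auto
    also have "\<dots> \<le> 2 * (n + 1)" using pq by simp
    finally show False using h by simp
  qed
  have pqn: "p * q \<ge> n + 1"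
  proof (rule ccontr)
    assume "\<not> p * q \<ge> n + 1"
    hence a: "p * q \<le> n" by simp
    have "(p + 1) * (q + 1) = p * q + p + q + 1" by (simp add: algebra_simps)
    hence h': "2 * (n + 1) < p * q + p + q + 1" using h by simp
    have "p + q \<ge> n + 2"
    proof -
      obtain r where r: "r = p * q" by blast
      show ?thesis using h' a unfolding r[symmetric] by presburger
    qed
    hence "2 * q \<ge> n + 3" using pq by linarith
    moreover have "p * q \<ge> 2 * q" using p2 by (intro mult_right_mono) auto
    ultimately show False using a by linarith
  qed
  have e: "int n - int k = int p" "int n - int l = int q" using assms by (auto simp: p_def q_def)
  show "int n - int k \<ge> 2" using p2 e by simp
  have "int (p * q) \<ge> int (n + 1)" using pqn by linarith
  thus "(int n - int k) * (int n - int l) \<ge> int n + 1" unfolding e by simp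
qed

theorem lemma5:
  fixes n k l :: nat
  assumes "l < k" and "k \<le> n"
  shows "(\<forall>lam \<in> Gamma_plus n k. \<forall>i\<in>{1..n}. \<forall>j\<in>{1..n}.
            lam i \<le> lam j \<longrightarrow> Fii n k l lam i \<ge> Fii n k l lam j)
       \<and> ((real (n - k + 1) * real (n - l + 1) > 2 * real (n + 1)) \<longrightarrow>
            (\<exists>c > 0. \<forall>lam \<in> Gamma_plus n k. lam 1 > 0 \<longrightarrow>
               (\<Sum>i=1..n. Fii n k l lam i) \<ge> (2 + c) * Fii n k l lam 1))"
proof
  show "\<forall>lam \<in> Gamma_plus n k. \<forall>i\<in>{1..n}. \<forall>j\<in>{1..n}.
            lam i \<le> lam j \<longrightarrow> Fii n k l lam i \<ge> Fii n k l lam j"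
  proof (intro ballI impI)
    fix lam i j assume lam: "lam \<in> Gamma_plus n k" and ij: "i \<in> {1..n}" "j \<in> {1..n}"
      and le: "lam i \<le> lam j"
    have "NN {1..n} (int k) (int l) lam j \<le> NN {1..n} (int k) (int l) lam i"
      by (rule part1[OF _ ij _ _ gamma_pos[OF lam] le]) (use assms in auto)
    thus "Fii n k l lam i \<ge> Fii n k l lam j"
      unfolding Fii_NN by (rule mult_left_mono[OF _ Fstar_nonneg])
  qed
next
  show "(real (n - k + 1) * real (n - l + 1) > 2 * real (n + 1)) \<longrightarrow>
            (\<exists>c > 0. \<forall>lam \<in> Gamma_plus n k. lam 1 > 0 \<longrightarrow>
               (\<Sum>i=1..n. Fii n k l lam i) \<ge> (2 + c) * Fii n k l lam 1)"
  proof
    assume h: "real (n - k + 1) * real (n - l + 1) > 2 * real (n + 1)"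
    note ar = cond_arith[OF assms h]
    have n1: "n \<ge> 1" using assms by simp
    show "\<exists>c > 0. \<forall>lam \<in> Gamma_plus n k. lam 1 > 0 \<longrightarrow>
               (\<Sum>i=1..n. Fii n k l lam i) \<ge> (2 + c) * Fii n k l lam 1"
    proof (intro exI[of _ "1 / real n"] conjI ballI impI)
      show "1 / real n > 0" using n1 by simp
      fix lam assume lam: "lam \<in> Gamma_plus n k" and t: "lam 1 > 0"
      have "(2 + 1 / real n) * NN {1..n} (int k) (int l) lam 1 \<le> (\<Sum>i\<in>{1..n}. NN {1..n} (int k) (int l) lam i)"
        by (rule part2[OF _ _ _ _ _ _ gamma_pos[OF lam] t ar]) (use assms n1 in auto)
      hence "Fstar n k l lam * ((2 + 1 / real n) * NN {1..n} (int k) (int l) lam 1)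
          \<le> Fstar n k l lam * (\<Sum>i\<in>{1..n}. NN {1..n} (int k) (int l) lam i)"
        by (rule mult_left_mono[OF _ Fstar_nonneg])
      thus "(\<Sum>i=1..n. Fii n k l lam i) \<ge> (2 + 1 / real n) * Fii n k l lam 1"
        unfolding Fii_NN by (simp add: sum_distrib_left mult_ac)
    qed
  qed
qed

end
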